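(* In Algorithm MC (with $|b_j(v)|\le\deg(v)$ for all $v,j$ and $\alpha\in(0,1/4]$), for every $j\in[k]$ and every $i\ge0$ such that rounds $1,\dots,i$ have computed $r^1,\dots,r^i$, we have $\sum_{v\in V}|r^{\le i}_{v,j}|\cdot\deg(v)\le i\cdot\|b_j\|_1$.
   Context: Let $G=(V,E)$ be a unit-capacity undirected graph, $n=|V|\ge3$, every vertex of degree $\deg(v)\ge1$, each edge with a fixed arbitrary orientation; $B\in\mathbb R^{V\times E}$ is the incidence matrix (column $(u,v)$ has $+1$ in row $u$, $-1$ in row $v$, $0$ elsewhere). Algorithm MC takes $k\ge1$, $b=(b_1,\dots,b_k)\in\mathbb R^{V\times[k]}$ with $|b_j(v)|\le\deg(v)$ for all $v,j$, $\alpha\in(0,1/4]$ and an integer $T\ge1$. Set $w^1_{v,j,+}=w^1_{v,j,-}=1$. For $i=1,\dots,T$: (1) $\tilde w^i_{v,j,\circ}=w^i_{v,j,\circ}$ if $w^i_{v,j,\circ}\ge n$ and $0$ otherwise ($\circ\in\{+,-\}$); (2) $\tilde\phi^i_{v,j}=(\tilde w^i_{v,j,+}-\tilde w^i_{v,j,-})/\deg(v)$; (3) for each edge $(u,v)$ let $j^*$ maximize $|\tilde\phi^i_{u,j}-\tilde\phi^i_{v,j}|$ over $j\in[k]$ (ties arbitrary), set $f^i_{j^*}(u,v)=+1$ if $\tilde\phi^i_{u,j^*}>\tilde\phi^i_{v,j^*}$, $-1$ if $<$, $0$ otherwise, and $f^i_j(u,v)=0$ for $j\ne j^*$; (4) if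 $\sum_{j,v}\tilde\phi^i_{v,j}b_j(v)>\sum_{j,v}\tilde\phi^i_{v,j}(Bf^i_j)_v$, terminate; (5) $r^i_{v,j}=(b_j(v)-(Bf^i_j)_v)/\deg(v)$; (6) $w^{i+1}_{v,j,+}=w^i_{v,j,+}(1+\alpha r^i_{v,j})$, $w^{i+1}_{v,j,-}=w^i_{v,j,-}(1-\alpha r^i_{v,j})$. Write $r^{\le i}_{v,j}=\sum_{i'=1}^{i}r^{i'}_{v,j}$, with $r^{\le0}_{v,j}=0$. $\|b_j\|_1=\sum_v|b_j(v)|$. *)

theory Defs
  imports Main "HOL-Library.Multiset" Complex_Main
begin

text \<open>Graph: finite vertex set V, finite edge set E (an abstract edge type, so
multigraphs are allowed), each edge e oriented from src e to tgt e.
The degree counts incident edges (no loops).\<close>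

definition deg :: "'e set \<Rightarrow> ('e \<Rightarrow> 'v) \<Rightarrow> ('e \<Rightarrow> 'v) \<Rightarrow> 'v \<Rightarrow> real" where
  "deg E src tgt v = real (card {e \<in> E. src e = v \<or> tgt e = v})"

text \<open>(Bf)_v for a flow f on edges (column of edge e: +1 at src e, -1 at tgt e).\<close>
definition Bmul :: "'e set \<Rightarrow> ('e \<Rightarrow> 'v) \<Rightarrow> ('e \<Rightarrow> 'v) \<Rightarrow> ('e \<Rightarrow> real) \<Rightarrow> 'v \<Rightarrow> real" where
  "Bmul E src tgt f v =
     (\<Sum>e\<in>E. (if src e = v then f e else if tgt e = v then - f e else 0))"

definition trunc_w :: "nat \<Rightarrow> real \<Rightarrow> real" where
  "trunc_w n w = (if w \<ge> real n then w else 0)"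

definition phi_of :: "'v set \<Rightarrow> 'e set \<Rightarrow> ('e \<Rightarrow> 'v) \<Rightarrow> ('e \<Rightarrow> 'v)
    \<Rightarrow> ('v \<Rightarrow> nat \<Rightarrow> real) \<times> ('v \<Rightarrow> nat \<Rightarrow> real) \<Rightarrow> 'v \<Rightarrow> nat \<Rightarrow> real" where
  "phi_of V E src tgt w v j =
     (trunc_w (card V) (fst w v j) - trunc_w (card V) (snd w v j)) / deg E src tgt v"

text \<open>Step (3): flow given potentials phi and the chosen commodity sel e = j* of each edge.\<close>
definition flow_of :: "('e \<Rightarrow> 'v) \<Rightarrow> ('e \<Rightarrow> 'v) \<Rightarrow> ('v \<Rightarrow> nat \<Rightarrow> real)
    \<Rightarrow> ('e \<Rightarrow> nat) \<Rightarrow> nat \<Rightarrow> 'e \<Rightarrow> real" where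
  "flow_of src tgt phi sel j e =
     (if sel e = j then
        (if phi (src e) j > phi (tgt e) j then 1
         else if phi (src e) j < phi (tgt e) j then -1 else 0)
      else 0)"

definition r_of :: "'v set \<Rightarrow> 'e set \<Rightarrow> ('e \<Rightarrow> 'v) \<Rightarrow> ('e \<Rightarrow> 'v) \<Rightarrow> ('v \<Rightarrow> nat \<Rightarrow> real)
    \<Rightarrow> ('e \<Rightarrow> nat) \<Rightarrow> ('v \<Rightarrow> nat \<Rightarrow> real) \<times> ('v \<Rightarrow> nat \<Rightarrow> real) \<Rightarrow> 'v \<Rightarrow> nat \<Rightarrow> real" where
  "r_of V E src tgt b sel w v j =
     (b v j - Bmul E src tgt (flow_of src tgt (phi_of V E src tgt w) sel j) v) / deg E src tgt v"

text \<open>MC_w ... m is the weight pair (w_+, w_-) at the start of round m+1, i.e. w^{m+1}.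
sel i e is the commodity j* chosen for edge e in round i (i >= 1).\<close>
primrec MC_w :: "'v set \<Rightarrow> 'e set \<Rightarrow> ('e \<Rightarrow> 'v) \<Rightarrow> ('e \<Rightarrow> 'v) \<Rightarrow> ('v \<Rightarrow> nat \<Rightarrow> real)
    \<Rightarrow> real \<Rightarrow> (nat \<Rightarrow> 'e \<Rightarrow> nat) \<Rightarrow> nat \<Rightarrow> ('v \<Rightarrow> nat \<Rightarrow> real) \<times> ('v \<Rightarrow> nat \<Rightarrow> real)" where
  "MC_w V E src tgt b \<alpha> sel 0 = (\<lambda>v j. 1, \<lambda>v j. 1)"
| "MC_w V E src tgt b \<alpha> sel (Suc m) =
     (let w = MC_w V E src tgt b \<alpha> sel m;
          r = r_of V E src tgt b (sel (Suc m)) w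
      in (\<lambda>v j. fst w v j * (1 + \<alpha> * r v j), \<lambda>v j. snd w v j * (1 - \<alpha> * r v j)))"

definition MC_phi where
  "MC_phi V E src tgt b \<alpha> sel i = phi_of V E src tgt (MC_w V E src tgt b \<alpha> sel (i - 1))"

definition MC_f where
  "MC_f V E src tgt b \<alpha> sel i j = flow_of src tgt (MC_phi V E src tgt b \<alpha> sel i) (sel i) j"

definition MC_r where
  "MC_r V E src tgt b \<alpha> sel i = r_of V E src tgt b (sel i) (MC_w V E src tgt b \<alpha> sel (i - 1))"

definition MC_valid_sel where
  "MC_valid_sel V E src tgt b \<alpha> k sel i \<longleftrightarrow>
     (\<forall>e\<in>E. sel i e < k \<and>
        (\<forall>j<k. \<bar>MC_phi V E src tgt b \<alpha> sel i (src e) j - MC_phi V E src tgt b \<alpha> sel i (tgt e) j\<bar>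
             \<le> \<bar>MC_phi V E src tgt b \<alpha> sel i (src e) (sel i e) - MC_phi V E src tgt b \<alpha> sel i (tgt e) (sel i e)\<bar>))"

definition MC_terminates where
  "MC_terminates V E src tgt b \<alpha> k sel i \<longleftrightarrow>
     (\<Sum>j<k. \<Sum>v\<in>V. MC_phi V E src tgt b \<alpha> sel i v j * b v j)
       > (\<Sum>j<k. \<Sum>v\<in>V. MC_phi V E src tgt b \<alpha> sel i v j * Bmul E src tgt (MC_f V E src tgt b \<alpha> sel i j) v)"

end

theory Submission
  imports Defs
begin

lemma Bmul_abs_le:
  assumes "finite E" "\<And>e. \<bar>f e\<bar> \<le> 1"
  shows "\<bar>Bmul E src tgt f v\<bar> \<le> deg E src tgt v"
proof -
  have "\<bar>Bmul E src tgt f v\<bar> \<le> (\<Sum>e\<in>E. \<bar>if src e = v then f e else if tgt e = v then - f e else 0\<bar>)"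
    unfolding Bmul_def by (rule sum_abs)
  also have "\<dots> \<le> (\<Sum>e\<in>E. if src e = v \<or> tgt e = v then 1 else 0)"
    by (rule sum_mono) (use assms(2) in auto)
  also have "\<dots> = deg E src tgt v"
    unfolding deg_def using assms(1) by (simp add: sum.inter_filter[symmetric])
  finally show ?thesis .
qed

lemma round_step:
  fixes x p :: "'v \<Rightarrow> real" and f :: "'e \<Rightarrow> real"
  assumes fV: "finite V" and fE: "finite E"
    and EV: "\<forall>e\<in>E. src e \<in> V \<and> tgt e \<in> V \<and> src e \<noteq> tgt e"
    and f01: "\<forall>e. (f e = 1 \<and> p (src e) > p (tgt e)) \<or> (f e = -1 \<and> p (src e) < p (tgt e)) \<or> f e = 0"
    and pos: "\<forall>v\<in>V. p v > 0 \<longrightarrow> x v \<ge> deg E src tgt v"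
    and neg: "\<forall>v\<in>V. p v < 0 \<longrightarrow> x v \<le> - deg E src tgt v"
  shows "(\<Sum>v\<in>V. \<bar>x v - Bmul E src tgt f v\<bar>) \<le> (\<Sum>v\<in>V. \<bar>x v\<bar>)"
proof -
  define contr where "contr e v = (if src e = v then f e else if tgt e = v then - f e else 0)" for e v
  define d where "d v e = (if p v > 0 then - contr e v else if p v < 0 then contr e v else \<bar>contr e v\<bar>)" for v e
  have fb: "\<And>e. \<bar>f e\<bar> \<le> 1" using f01 by (metis abs_one abs_minus_cancel abs_zero order_refl zero_le_one)
  have Bc: "Bmul E src tgt f v = (\<Sum>e\<in>E. contr e v)" for v unfolding Bmul_def contr_def by simp
  have step1: "\<bar>x v - Bmul E src tgt f v\<bar> \<le> \<bar>x v\<bar> + (\<Sum>e\<in>E. d v e)" if vV: "v \<in> V" for v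
  proof -
    have bnd: "\<bar>Bmul E src tgt f v\<bar> \<le> deg E src tgt v" by (rule Bmul_abs_le[OF fE fb])
    consider "p v > 0" | "p v < 0" | "p v = 0" by linarith
    then show ?thesis
    proof cases
      case 1
      then have "x v \<ge> deg E src tgt v" using pos vV by auto
      moreover have "(\<Sum>e\<in>E. d v e) = - Bmul E src tgt f v" using 1 unfolding d_def Bc by (simp add: sum_negf)
      ultimately show ?thesis using bnd by linarith
    next
      case 2
      then have "x v \<le> - deg E src tgt v" using neg vV by auto
      moreover have "(\<Sum>e\<in>E. d v e) = Bmul E src tgt f v" using 2 unfolding d_def Bc by simp
      ultimately show ?thesis using bnd by linarith
    next
      case 3
      have "(\<Sum>e\<in>E. d v e) = (\<Sum>e\<in>E. \<bar>contr e v\<bar>)" using 3 unfolding d_def by simp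
      moreover have "\<bar>Bmul E src tgt f v\<bar> \<le> (\<Sum>e\<in>E. \<bar>contr e v\<bar>)" unfolding Bc by (rule sum_abs)
      ultimately show ?thesis by linarith
    qed
  qed
  have edge: "(\<Sum>v\<in>V. d v e) \<le> 0" if eE: "e \<in> E" for e
  proof -
    have sV: "src e \<in> V" and tV: "tgt e \<in> V" and st: "src e \<noteq> tgt e" using EV eE by auto
    have "(\<Sum>v\<in>V. d v e) = (\<Sum>v\<in>{src e, tgt e}. d v e)"
      by (rule sum.mono_neutral_right[OF fV]) (use sV tV in \<open>auto simp: d_def contr_def\<close>)
    also have "\<dots> = d (src e) e + d (tgt e) e" using st by simp
    also have "\<dots> \<le> 0"
      using f01[rule_format, of e] st unfolding d_def contr_def
      by (auto split: if_splits)
    finally show ?thesis .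
  qed
  have "(\<Sum>v\<in>V. \<bar>x v - Bmul E src tgt f v\<bar>) \<le> (\<Sum>v\<in>V. \<bar>x v\<bar> + (\<Sum>e\<in>E. d v e))"
    by (rule sum_mono) (rule step1)
  also have "\<dots> = (\<Sum>v\<in>V. \<bar>x v\<bar>) + (\<Sum>e\<in>E. \<Sum>v\<in>V. d v e)"
    by (simp add: sum.distrib sum.swap[of _ V E])
  also have "\<dots> \<le> (\<Sum>v\<in>V. \<bar>x v\<bar>)"
    using sum_nonpos[of E "\<lambda>e. \<Sum>v\<in>V. d v e"] edge by auto
  finally show ?thesis .
qed

lemma W_prod:
  "fst (MC_w V E src tgt b \<alpha> sel m) v j = (\<Prod>t=1..m. 1 + \<alpha> * MC_r V E src tgt b \<alpha> sel t v j) \<and>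
   snd (MC_w V E src tgt b \<alpha> sel m) v j = (\<Prod>t=1..m. 1 - \<alpha> * MC_r V E src tgt b \<alpha> sel t v j)"
proof (induction m arbitrary: v j)
  case 0
  then show ?case by simp
next
  case (Suc m)
  have r: "MC_r V E src tgt b \<alpha> sel (Suc m) = r_of V E src tgt b (sel (Suc m)) (MC_w V E src tgt b \<alpha> sel m)"
    unfolding MC_r_def by simp
  show ?case using Suc.IH by (simp add: Let_def r prod.cl_ivl_Suc)
qed

lemma r_bound:
  assumes "finite E" "deg E src tgt v \<ge> 1" "\<bar>b v j\<bar> \<le> deg E src tgt v"
  shows "\<bar>MC_r V E src tgt b \<alpha> sel t v j\<bar> \<le> 2"
proof -
  let ?B = "Bmul E src tgt (flow_of src tgt (phi_of V E src tgt (MC_w V E src tgt b \<alpha> sel (t - 1))) (sel t) j) v"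
  have fb: "\<bar>flow_of src tgt ph s j e\<bar> \<le> 1" for ph s e unfolding flow_of_def by auto
  have "\<bar>?B\<bar> \<le> deg E src tgt v" by (rule Bmul_abs_le[OF assms(1) fb])
  then have "\<bar>b v j - ?B\<bar> \<le> 2 * deg E src tgt v" using assms by linarith
  moreover have "MC_r V E src tgt b \<alpha> sel t v j = (b v j - ?B) / deg E src tgt v"
    unfolding MC_r_def r_of_def by simp
  ultimately show ?thesis using assms(2) by (simp add: abs_divide divide_le_eq)
qed

lemma prod_exp_bound:
  fixes a :: "nat \<Rightarrow> real"
  assumes "\<And>t. 0 \<le> 1 + a t"
  shows "(\<Prod>t=1..m. 1 + a t) \<le> exp (\<Sum>t=1..m. a t)"
proof -
  have "(\<Prod>t=1..m. 1 + a t) \<le> (\<Prod>t=1..m. exp (a t))"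
    by (rule prod_mono) (use assms in auto)
  also have "\<dots> = exp (\<Sum>t=1..m. a t)" by (simp add: exp_sum)
  finally show ?thesis .
qed

lemma trunc_pos:
  assumes "card V \<ge> 3" "trunc_w (card V) a - trunc_w (card V) c > 0"
  shows "a \<ge> 3"
  using assms unfolding trunc_w_def by (auto split: if_splits)

lemma sign_lemma:
  assumes fE: "finite E" and dg: "deg E src tgt v \<ge> 1" and bb: "\<bar>b v j\<bar> \<le> deg E src tgt v"
    and a0: "0 < \<alpha>" and a1: "\<alpha> \<le> 1/4" and cV: "card V \<ge> 3"
  shows "phi_of V E src tgt (MC_w V E src tgt b \<alpha> sel m) v j > 0 \<Longrightarrow> (\<Sum>t=1..m. MC_r V E src tgt b \<alpha> sel t v j) \<ge> 1"
    and "phi_of V E src tgt (MC_w V E src tgt b \<alpha> sel m) v j < 0 \<Longrightarrow> (\<Sum>t=1..m. MC_r V E src tgt b \<alpha> sel t v j) \<le> -1"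
proof -
  let ?r = "\<lambda>t. MC_r V E src tgt b \<alpha> sel t v j"
  let ?w = "MC_w V E src tgt b \<alpha> sel m"
  let ?S = "\<Sum>t=1..m. ?r t"
  have rb: "\<bar>?r t\<bar> \<le> 2" for t by (rule r_bound[where E=E and src=src and tgt=tgt and v=v and b=b and j=j, OF fE dg bb])
  have ar: "\<bar>\<alpha> * ?r t\<bar> \<le> 1/2" for t
  proof -
    have "\<bar>\<alpha> * ?r t\<bar> = \<alpha> * \<bar>?r t\<bar>" using a0 by (simp add: abs_mult)
    also have "\<dots> \<le> (1/4) * 2" using rb[of t] a0 a1 by (intro mult_mono) auto
    finally show ?thesis by simp
  qed
  have ar1: "0 \<le> 1 + \<alpha> * ?r t" for t using ar[of t] by (simp add: abs_le_iff)
  have ar2: "0 \<le> 1 + - (\<alpha> * ?r t)" for t using ar[of t] by (simp add: abs_le_iff)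
  have dpos: "deg E src tgt v > 0" using dg by linarith
  {
    assume "phi_of V E src tgt ?w v j > 0"
    then have "trunc_w (card V) (fst ?w v j) - trunc_w (card V) (snd ?w v j) > 0"
      unfolding phi_of_def using dpos by (simp add: zero_less_divide_iff)
    then have "fst ?w v j \<ge> 3" by (rule trunc_pos[OF cV])
    moreover have "fst ?w v j \<le> exp (\<Sum>t=1..m. \<alpha> * ?r t)"
      unfolding W_prod[THEN conjunct1]
      by (rule prod_exp_bound[of "\<lambda>t. \<alpha> * ?r t"]) (rule ar1)
    ultimately have "exp 1 \<le> exp (\<Sum>t=1..m. \<alpha> * ?r t)" using exp_le by linarith
    then have "1 \<le> \<alpha> * ?S" by (simp add: sum_distrib_left)
    moreover have "?S < 1 \<Longrightarrow> \<alpha> * ?S \<le> \<alpha> * 1" using a0 by (intro mult_left_mono) auto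
    ultimately show "?S \<ge> 1" using a1 by linarith
  }
  {
    assume "phi_of V E src tgt ?w v j < 0"
    then have "trunc_w (card V) (snd ?w v j) - trunc_w (card V) (fst ?w v j) > 0"
      unfolding phi_of_def using dpos by (simp add: divide_less_0_iff)
    then have "snd ?w v j \<ge> 3" by (rule trunc_pos[OF cV])
    moreover have "snd ?w v j \<le> exp (\<Sum>t=1..m. - (\<alpha> * ?r t))"
      unfolding W_prod[THEN conjunct2]
      using prod_exp_bound[of "\<lambda>t. - (\<alpha> * ?r t)" m, OF ar2] by simp
    ultimately have "exp 1 \<le> exp (\<Sum>t=1..m. - (\<alpha> * ?r t))" using exp_le by linarith
    then have "1 \<le> - (\<alpha> * ?S)" by (simp add: sum_distrib_left sum_negf)
    moreover have "?S > -1 \<Longrightarrow> \<alpha> * (-1) \<le> \<alpha> * ?S" using a0 by (intro mult_left_mono) auto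
    ultimately show "?S \<le> -1" using a1 by linarith
  }
qed

theorem lemma2p14:
  fixes V :: "'v set" and E :: "'e set" and src tgt :: "'e \<Rightarrow> 'v"
    and k T i :: nat and b :: "'v \<Rightarrow> nat \<Rightarrow> real" and \<alpha> :: real
    and sel :: "nat \<Rightarrow> 'e \<Rightarrow> nat" and j :: nat
  assumes "finite V" and "finite E" and "card V \<ge> 3"
    and "\<forall>e\<in>E. src e \<in> V \<and> tgt e \<in> V \<and> src e \<noteq> tgt e"
    and "\<forall>v\<in>V. deg E src tgt v \<ge> 1"
    and "k \<ge> 1"
    and "\<forall>v\<in>V. \<forall>j'<k. \<bar>b v j'\<bar> \<le> deg E src tgt v"
    and "0 < \<alpha>" and "\<alpha> \<le> 1/4"
    and "T \<ge> 1"
    and "j < k"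
    and "i \<le> T"
    and "\<forall>i'\<in>{1..i}. MC_valid_sel V E src tgt b \<alpha> k sel i'"
    and "\<forall>i'\<in>{1..i}. \<not> MC_terminates V E src tgt b \<alpha> k sel i'"
  shows "(\<Sum>v\<in>V. \<bar>\<Sum>i'=1..i. MC_r V E src tgt b \<alpha> sel i' v j\<bar> * deg E src tgt v)
           \<le> real i * (\<Sum>v\<in>V. \<bar>b v j\<bar>)"
proof -
  note fV = assms(1) and fE = assms(2) and cV = assms(3) and EV = assms(4) and dg = assms(5)
  have bb: "\<forall>v\<in>V. \<bar>b v j\<bar> \<le> deg E src tgt v" using assms(7) assms(11) by auto
  let ?r = "\<lambda>t v. MC_r V E src tgt b \<alpha> sel t v j"
  let ?d = "deg E src tgt"
  show ?thesis
  proof (induction i)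
    case 0
    then show ?case by simp
  next
    case (Suc m)
    let ?p = "\<lambda>v. phi_of V E src tgt (MC_w V E src tgt b \<alpha> sel m) v j"
    let ?f = "flow_of src tgt (phi_of V E src tgt (MC_w V E src tgt b \<alpha> sel m)) (sel (Suc m)) j"
    define x where "x v = (\<Sum>t=1..m. ?r t v) * ?d v" for v
    have eq: "(\<Sum>t=1..Suc m. ?r t v) * ?d v = x v - Bmul E src tgt ?f v + b v j" if "v \<in> V" for v
    proof -
      have "?d v \<noteq> 0" using dg that by fastforce
      moreover have "?r (Suc m) v = (b v j - Bmul E src tgt ?f v) / ?d v"
        unfolding MC_r_def r_of_def by simp
      ultimately show ?thesis unfolding x_def by (simp add: distrib_right)
    qed
    have rs: "(\<Sum>v\<in>V. \<bar>x v - Bmul E src tgt ?f v\<bar>) \<le> (\<Sum>v\<in>V. \<bar>x v\<bar>)"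
    proof (rule round_step[OF fV fE EV])
      show "\<forall>e. (?f e = 1 \<and> ?p (src e) > ?p (tgt e)) \<or> (?f e = -1 \<and> ?p (src e) < ?p (tgt e)) \<or> ?f e = 0"
        unfolding flow_of_def by auto
      show "\<forall>v\<in>V. ?p v > 0 \<longrightarrow> x v \<ge> ?d v"
      proof (intro ballI impI)
        fix v assume v: "v \<in> V" "?p v > 0"
        have "(\<Sum>t=1..m. ?r t v) \<ge> 1"
          by (rule sign_lemma(1)[OF fE _ _ assms(8) assms(9) cV]) (use v dg bb in auto)
        moreover have "?d v \<ge> 0" using dg v by fastforce
        ultimately have "1 * ?d v \<le> (\<Sum>t=1..m. ?r t v) * ?d v" by (rule mult_right_mono)
        then show "x v \<ge> ?d v" unfolding x_def by simp
      qed
      show "\<forall>v\<in>V. ?p v < 0 \<longrightarrow> x v \<le> - ?d v"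
      proof (intro ballI impI)
        fix v assume v: "v \<in> V" "?p v < 0"
        have "(\<Sum>t=1..m. ?r t v) \<le> -1"
          by (rule sign_lemma(2)[OF fE _ _ assms(8) assms(9) cV]) (use v dg bb in auto)
        moreover have "?d v \<ge> 0" using dg v by fastforce
        ultimately have "(\<Sum>t=1..m. ?r t v) * ?d v \<le> (-1) * ?d v" by (rule mult_right_mono)
        then show "x v \<le> - ?d v" unfolding x_def by simp
      qed
    qed
    have "(\<Sum>v\<in>V. \<bar>\<Sum>t=1..Suc m. ?r t v\<bar> * ?d v) = (\<Sum>v\<in>V. \<bar>x v - Bmul E src tgt ?f v + b v j\<bar>)"
    proof (rule sum.cong[OF refl])
      fix v assume v: "v \<in> V"
      have "?d v \<ge> 0" using dg v by fastforce
      then have "\<bar>\<Sum>t=1..Suc m. ?r t v\<bar> * ?d v = \<bar>(\<Sum>t=1..Suc m. ?r t v) * ?d v\<bar>" by (simp add: abs_mult)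
      then show "\<bar>\<Sum>t=1..Suc m. ?r t v\<bar> * ?d v = \<bar>x v - Bmul E src tgt ?f v + b v j\<bar>" using eq[OF v] by simp
    qed
    also have "\<dots> \<le> (\<Sum>v\<in>V. \<bar>x v - Bmul E src tgt ?f v\<bar> + \<bar>b v j\<bar>)"
      by (rule sum_mono) (rule abs_triangle_ineq)
    also have "\<dots> \<le> (\<Sum>v\<in>V. \<bar>x v\<bar>) + (\<Sum>v\<in>V. \<bar>b v j\<bar>)" using rs by (simp add: sum.distrib)
    also have "(\<Sum>v\<in>V. \<bar>x v\<bar>) = (\<Sum>v\<in>V. \<bar>\<Sum>t=1..m. ?r t v\<bar> * ?d v)"
    proof (rule sum.cong[OF refl])
      fix v assume v: "v \<in> V"
      have "?d v \<ge> 0" using dg v by fastforce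
      then show "\<bar>x v\<bar> = \<bar>\<Sum>t=1..m. ?r t v\<bar> * ?d v" unfolding x_def by (simp add: abs_mult)
    qed
    also have "\<dots> + (\<Sum>v\<in>V. \<bar>b v j\<bar>) \<le> real m * (\<Sum>v\<in>V. \<bar>b v j\<bar>) + (\<Sum>v\<in>V. \<bar>b v j\<bar>)"
      using Suc.IH by simp
    also have "\<dots> = real (Suc m) * (\<Sum>v\<in>V. \<bar>b v j\<bar>)" by (simp add: algebra_simps)
    finally show ?case .
  qed
qed

end
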